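(* Let $a=(a_1,a_2,\dots)$ be any real sequence, $p\in[1,\infty)$ and $w$ a weight sequence. Then $$\sup_{\sigma\in\Pi}\Big(\sum_{i=1}^\infty |a_{\sigma_i}|^p w_i\Big)^{1/p}=\sup_{\sigma\in\Psi}\Big(\sum_{i=1}^\infty |a_{\sigma_i}|^p w_i\Big)^{1/p},$$ where both sides are understood in $[0,+\infty]$.
   Context: A weight sequence is a sequence $w=(w_i)$ of positive reals with $w_1=1\ge w_2\ge\dots$, $w_i\to0$, and $\sum_i w_i=+\infty$. $\Pi$ denotes the set of all bijections $\sigma:\mathbb{N}\to\mathbb{N}$ (written as sequences $(\sigma_1,\sigma_2,\dots)$) and $\Psi$ the set of all injective maps $\sigma:\mathbb{N}\to\mathbb{N}$. *)

theory Defs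
  imports "HOL-Analysis.Analysis"
begin

text \<open>Weight sequence (0-based indexing: w 0 plays the role of w_1).\<close>
definition weight_seq :: "(nat \<Rightarrow> real) \<Rightarrow> bool" where
  "weight_seq w \<longleftrightarrow> (\<forall>i. w i > 0) \<and> w 0 = 1 \<and> decseq w \<and> w \<longlonglongrightarrow> 0 \<and> \<not> summable w"

definition enn_root :: "real \<Rightarrow> ennreal \<Rightarrow> ennreal" where
  "enn_root p x = (if x = top then top else ennreal (enn2real x powr (1 / p)))"

definition weighted_val :: "real \<Rightarrow> (nat \<Rightarrow> real) \<Rightarrow> (nat \<Rightarrow> real) \<Rightarrow> (nat \<Rightarrow> nat) \<Rightarrow> ennreal" where
  "weighted_val p w a \<sigma> = enn_root p (\<Sum>i. ennreal (\<bar>a (\<sigma> i)\<bar> powr p * w i))"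

end

theory Submission
  imports Defs
begin

lemma extend_bij:
  fixes \<sigma> :: "nat \<Rightarrow> nat"
  assumes "inj \<sigma>"
  shows "\<exists>\<tau>. bij \<tau> \<and> (\<forall>i<N. \<tau> i = \<sigma> i)"
proof -
  define A where "A = {..<N}"
  define B where "B = \<sigma> ` A"
  have fA: "finite A" and fB: "finite B" unfolding A_def B_def by auto
  have iA: "infinite (- A)" using fA by (simp add: Compl_eq_Diff_UNIV infinite_UNIV_nat)
  have iB: "infinite (- B)" using fB by (simp add: Compl_eq_Diff_UNIV infinite_UNIV_nat)
  define g where "g = enumerate (- B) \<circ> inv_into UNIV (enumerate (- A))"
  have g: "bij_betw g (- A) (- B)"
    unfolding g_def
    by (rule bij_betw_trans[OF bij_betw_inv_into[OF bij_enumerate[OF iA]] bij_enumerate[OF iB]])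
  have s: "bij_betw \<sigma> A B" unfolding B_def
    using assms by (simp add: bij_betw_imageI inj_on_subset)
  have "bij_betw (\<lambda>x. if x \<in> A then \<sigma> x else g x) (A \<union> - A) (B \<union> - B)"
    by (rule bij_betw_disjoint_Un[OF s g]) auto
  then have "bij (\<lambda>x. if x \<in> A then \<sigma> x else g x)" by simp
  then show ?thesis by (intro exI[of _ "\<lambda>x. if x \<in> A then \<sigma> x else g x"]) (auto simp: A_def)
qed

theorem mainTheorem2:
  fixes a w :: "nat \<Rightarrow> real" and p :: real
  assumes "1 \<le> p" and "weight_seq w"
  shows "(SUP \<sigma>\<in>{\<sigma>. bij \<sigma>}. weighted_val p w a \<sigma>) = (SUP \<sigma>\<in>{\<sigma>. inj \<sigma>}. weighted_val p w a \<sigma>)"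
proof (rule antisym)
  show "(SUP \<sigma>\<in>{\<sigma>. bij \<sigma>}. weighted_val p w a \<sigma>) \<le> (SUP \<sigma>\<in>{\<sigma>. inj \<sigma>}. weighted_val p w a \<sigma>)"
    by (rule SUP_subset_mono) (auto simp: bij_is_inj)
next
  define T where "T = (SUP \<sigma>\<in>{\<sigma>. bij \<sigma>}. weighted_val p w a \<sigma>)"
  define f where "f = (\<lambda>\<sigma> i. \<bar>a (\<sigma> i)\<bar> powr p * w i)"
  have wpos: "\<And>i. w i > 0" using assms(2) by (simp add: weight_seq_def)
  have fnn: "\<And>\<sigma> i. f \<sigma> i \<ge> 0" unfolding f_def using wpos by (simp add: less_imp_le)
  have p0: "p > 0" using assms(1) by simp
  have wv: "\<And>\<sigma>. weighted_val p w a \<sigma> = enn_root p (\<Sum>i. ennreal (f \<sigma> i))"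
    by (simp add: weighted_val_def f_def)
  show "(SUP \<sigma>\<in>{\<sigma>. inj \<sigma>}. weighted_val p w a \<sigma>) \<le> T"
  proof (rule SUP_least)
    fix \<sigma> :: "nat \<Rightarrow> nat" assume "\<sigma> \<in> {\<sigma>. inj \<sigma>}"
    then have inj: "inj \<sigma>" by simp
    show "weighted_val p w a \<sigma> \<le> T"
    proof (cases "T = top")
      case True then show ?thesis by simp
    next
      case False
      then obtain t where Tt: "T = ennreal t" and t0: "t \<ge> 0"
        by (cases T) auto
      have part: "(\<Sum>i<N. ennreal (f \<sigma> i)) \<le> ennreal (t powr p)" for N
      proof -
        obtain \<tau> where tb: "bij \<tau>" and te: "\<forall>i<N. \<tau> i = \<sigma> i"
          using extend_bij[OF inj] by blast
        have eq: "(\<Sum>i<N. ennreal (f \<sigma> i)) = (\<Sum>i<N. ennreal (f \<tau> i))"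
          using te by (intro sum.cong) (auto simp: f_def)
        have le1: "(\<Sum>i<N. ennreal (f \<tau> i)) \<le> (\<Sum>i. ennreal (f \<tau> i))"
          by (intro sum_le_suminf summableI) auto
        have le2: "enn_root p (\<Sum>i. ennreal (f \<tau> i)) \<le> T"
          unfolding T_def using tb wv[of \<tau>] by (metis (mono_tags, lifting) SUP_upper mem_Collect_eq)
        have ntop: "(\<Sum>i. ennreal (f \<tau> i)) \<noteq> top"
          using le2 Tt by (auto simp: enn_root_def top_unique)
        then obtain u where u: "(\<Sum>i. ennreal (f \<tau> i)) = ennreal u" and u0: "u \<ge> 0"
          by (cases "(\<Sum>i. ennreal (f \<tau> i))") auto
        have "ennreal (u powr (1/p)) \<le> ennreal t"
          using le2 u u0 Tt by (simp add: enn_root_def)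
        then have "u powr (1/p) \<le> t" using t0 by simp
        then have "(u powr (1/p)) powr p \<le> t powr p"
          using p0 by (intro powr_mono2) auto
        then have "u \<le> t powr p" using u0 p0 by (simp add: powr_powr)
        then have "ennreal u \<le> ennreal (t powr p)" by simp
        then show ?thesis using eq le1 u by (metis order_trans)
      qed
      have S: "(\<Sum>i. ennreal (f \<sigma> i)) \<le> ennreal (t powr p)"
        by (rule suminf_le_const[OF summableI part])
      then obtain s where s: "(\<Sum>i. ennreal (f \<sigma> i)) = ennreal s" and s0: "s \<ge> 0"
        using S by (cases "(\<Sum>i. ennreal (f \<sigma> i))") (auto simp: top_unique)
      have "s \<le> t powr p" using S s s0 by simp
      then have "s powr (1/p) \<le> (t powr p) powr (1/p)"
        using p0 s0 by (intro powr_mono2) auto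
      then have "s powr (1/p) \<le> t" using p0 t0 by (simp add: powr_powr)
      then show ?thesis using s s0 Tt by (simp add: wv enn_root_def ennreal_leI)
    qed
  qed
qed

end
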